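(* Let $\rho>0$, let $A\colon[0,\infty)\to\mathbb R^{n\times n}$ and $f\colon[0,\infty)\times\mathbb R^n\to\mathbb R^n$ be continuous, and suppose that $x'=A(t)x$ has an exponential dichotomy on $[0,\infty)$ with constants $N,\lambda>0$. Suppose there exist $\delta,L>0$ such that $|f(t,x_1)-f(t,x_2)|\le L|x_1-x_2|$ for all $t\ge0$ and $x_1,x_2\in B_{\rho+\delta}(0)$. If $L<\lambda/(2N)$, then $x'=A(t)x+f(t,x)$ has the conditional Lipschitz shadowing property in $B_\rho(0)$. Moreover, if $x'=A(t)x$ has an exponential contraction or exponential expansion on $[0,\infty)$ with constants $N,\lambda$, then the same conclusion holds under the weaker condition $L<\lambda/N$.
   Context: $|\cdot|$ is a fixed norm on $\mathbb R^n$ and the induced matrix norm; $B_r(x)=\{y:|y-x|\le r\}$. For continuous $g\colon[0,\infty)\times\mathbb R^n\to\mathbb R^n$ and $\tau\in(0,\infty]$, a pseudosolution of $x'=g(t,x)$ on $[0,\tau)$ is a $C^1$ map $y\colon[0,\tau)\to\mathbb R^n$ with $\sigma_y:=\sup_{0\le t<\tau}|y'(t)-g(t,y(t))|<\infty$. The equation has the conditional Lipschitz shadowing property in $H\neq\emptyset$ if there exist $\varepsilon_0,\kappa>0$ such that whenever $0<\varepsilon\le\varepsilon_0$ and $y$ is a pseudosolution on $[0,\tau)$ ($\tau\in(0,\infty]$) with $\sigma_y\le\varepsilon$ and $y(t)\in H$ for all $t\in[0,\tau)$, there is a solution $x$ on $[0,\tau)$ with $\sup_{0\le t<\tau}|x(t)-y(t)|\le\kappa\varepsilon$.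 With $T(t,s)$ the transition matrix of $x'=A(t)x$: an exponential dichotomy on $[0,\infty)$ consists of projections $P(t)$ and constants $N,\lambda>0$ with $P(t)T(t,s)=T(t,s)P(s)$, $|T(t,s)P(s)|\le Ne^{-\lambda(t-s)}$ for $t\ge s\ge0$, and $|T(t,s)(I-P(s))|\le Ne^{-\lambda(s-t)}$ for $0\le t\le s$. It is an exponential contraction if moreover $P(t)=I$ for all $t$, and an exponential expansion if $P(t)=0$ for all $t$. *)

theory Defs
  imports "HOL-Analysis.Analysis"
begin

definition is_norm :: "(real^'n \<Rightarrow> real) \<Rightarrow> bool" where
  "is_norm nrm \<longleftrightarrow>
     (\<forall>x. 0 \<le> nrm x) \<and> (\<forall>x. nrm x = 0 \<longleftrightarrow> x = 0) \<and>
     (\<forall>c x. nrm (c *\<^sub>R x) = \<bar>c\<bar> * nrm x) \<and>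
     (\<forall>x y. nrm (x + y) \<le> nrm x + nrm y)"

definition mat_norm :: "(real^'n \<Rightarrow> real) \<Rightarrow> real^'n^'n \<Rightarrow> real" where
  "mat_norm nrm M = (SUP x\<in>{x. nrm x \<le> 1}. nrm (M *v x))"

definition nball :: "(real^'n \<Rightarrow> real) \<Rightarrow> real^'n \<Rightarrow> real \<Rightarrow> (real^'n) set" where
  "nball nrm x r = {y. nrm (y - x) \<le> r}"

definition ivl :: "ereal \<Rightarrow> real set" where
  "ivl \<tau> = {t. 0 \<le> t \<and> ereal t < \<tau>}"

definition is_pseudosolution ::
  "(real^'n \<Rightarrow> real) \<Rightarrow> (real \<Rightarrow> real^'n \<Rightarrow> real^'n) \<Rightarrow> ereal \<Rightarrow> (real \<Rightarrow> real^'n) \<Rightarrow> bool" where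
  "is_pseudosolution nrm g \<tau> y \<longleftrightarrow>
     (\<forall>t\<in>ivl \<tau>. y differentiable (at t within ivl \<tau>)) \<and>
     continuous_on (ivl \<tau>) (\<lambda>t. vector_derivative y (at t within ivl \<tau>)) \<and>
     bdd_above ((\<lambda>t. nrm (vector_derivative y (at t within ivl \<tau>) - g t (y t))) ` ivl \<tau>)"

definition pseudo_err ::
  "(real^'n \<Rightarrow> real) \<Rightarrow> (real \<Rightarrow> real^'n \<Rightarrow> real^'n) \<Rightarrow> ereal \<Rightarrow> (real \<Rightarrow> real^'n) \<Rightarrow> real" where
  "pseudo_err nrm g \<tau> y =
     (SUP t\<in>ivl \<tau>. nrm (vector_derivative y (at t within ivl \<tau>) - g t (y t)))"

definition is_solution ::
  "(real \<Rightarrow> real^'n \<Rightarrow> real^'n) \<Rightarrow> ereal \<Rightarrow> (real \<Rightarrow> real^'n) \<Rightarrow> bool" where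
  "is_solution g \<tau> x \<longleftrightarrow>
     (\<forall>t\<in>ivl \<tau>. (x has_vector_derivative g t (x t)) (at t within ivl \<tau>))"

definition cond_lipschitz_shadowing ::
  "(real^'n \<Rightarrow> real) \<Rightarrow> (real \<Rightarrow> real^'n \<Rightarrow> real^'n) \<Rightarrow> (real^'n) set \<Rightarrow> bool" where
  "cond_lipschitz_shadowing nrm g H \<longleftrightarrow>
     (\<exists>\<epsilon>0 \<kappa>. \<epsilon>0 > 0 \<and> \<kappa> > 0 \<and>
        (\<forall>\<epsilon> \<tau> y. 0 < \<epsilon> \<longrightarrow> \<epsilon> \<le> \<epsilon>0 \<longrightarrow> \<tau> > 0 \<longrightarrow>
           is_pseudosolution nrm g \<tau> y \<longrightarrow> pseudo_err nrm g \<tau> y \<le> \<epsilon> \<longrightarrow>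
           (\<forall>t\<in>ivl \<tau>. y t \<in> H) \<longrightarrow>
           (\<exists>x. is_solution g \<tau> x \<and>
                (\<forall>t\<in>ivl \<tau>. nrm (x t - y t) \<le> \<kappa> * \<epsilon>))))"

definition is_transition_matrix ::
  "(real \<Rightarrow> real^'n^'n) \<Rightarrow> (real \<Rightarrow> real \<Rightarrow> real^'n^'n) \<Rightarrow> bool" where
  "is_transition_matrix A T \<longleftrightarrow>
     (\<forall>s\<ge>0. T s s = mat 1 \<and>
        (\<forall>t\<ge>0. ((\<lambda>r. T r s) has_vector_derivative (A t ** T t s)) (at t within {0..})))"

definition exp_dichotomy_with ::
  "(real^'n \<Rightarrow> real) \<Rightarrow> (real \<Rightarrow> real^'n^'n) \<Rightarrow> (real \<Rightarrow> real^'n^'n) \<Rightarrow> real \<Rightarrow> real \<Rightarrow> bool" where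
  "exp_dichotomy_with nrm A P N lam \<longleftrightarrow> N > 0 \<and> lam > 0 \<and>
     (\<exists>T. is_transition_matrix A T \<and>
        (\<forall>t\<ge>0. P t ** P t = P t) \<and>
        (\<forall>t\<ge>0. \<forall>s\<ge>0. P t ** T t s = T t s ** P s) \<and>
        (\<forall>t s. 0 \<le> s \<longrightarrow> s \<le> t \<longrightarrow>
            mat_norm nrm (T t s ** P s) \<le> N * exp (- lam * (t - s))) \<and>
        (\<forall>t s. 0 \<le> t \<longrightarrow> t \<le> s \<longrightarrow>
            mat_norm nrm (T t s ** (mat 1 - P s)) \<le> N * exp (- lam * (s - t))))"

definition has_exp_dichotomy where
  "has_exp_dichotomy nrm A N lam \<longleftrightarrow> (\<exists>P. exp_dichotomy_with nrm A P N lam)"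

definition has_exp_contraction where
  "has_exp_contraction nrm A N lam \<longleftrightarrow> exp_dichotomy_with nrm A (\<lambda>_. mat 1) N lam"

definition has_exp_expansion where
  "has_exp_expansion nrm A N lam \<longleftrightarrow> exp_dichotomy_with nrm A (\<lambda>_. 0) N lam"

end

theory Submission
  imports Defs
begin


lemma bb_mm: "bounded_bilinear ((**) :: real^'n^'n \<Rightarrow> real^'n^'n \<Rightarrow> real^'n^'n)"
  unfolding bilinear_conv_bounded_bilinear[symmetric] bilinear_def
  by (auto intro!: linearI simp: vec_eq_iff matrix_matrix_mult_def sum.distrib sum_distrib_left algebra_simps)

lemma bb_mv: "bounded_bilinear ((*v) :: real^'n^'n \<Rightarrow> real^'n \<Rightarrow> real^'n)"
  unfolding bilinear_conv_bounded_bilinear[symmetric] bilinear_def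
  by (auto intro!: linearI simp: vec_eq_iff matrix_vector_mult_def sum.distrib sum_distrib_left algebra_simps)



lemma nrm_props:
  assumes "is_norm nrm"
  shows "nrm 0 = 0" "\<And>x. 0 \<le> nrm x" "\<And>x. nrm (-x) = nrm x" "\<And>x y. nrm (x + y) \<le> nrm x + nrm y"
    "\<And>c x. nrm (c *\<^sub>R x) = \<bar>c\<bar> * nrm x" "\<And>x. nrm x = 0 \<longleftrightarrow> x = 0"
    "\<And>x y. nrm (x - y) = nrm (y - x)" "\<And>x y. nrm (x - y) \<le> nrm x + nrm y"
    "\<And>x y. \<bar>nrm x - nrm y\<bar> \<le> nrm (x - y)"
proof -
  note a = assms[unfolded is_norm_def]
  show n0: "nrm 0 = 0" using a by auto
  show "\<And>x. 0 \<le> nrm x" using a by auto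
  show neg: "\<And>x. nrm (-x) = nrm x" using a[THEN conjunct2, THEN conjunct2, THEN conjunct1, rule_format, of "-1"] by simp
  show tri: "\<And>x y. nrm (x + y) \<le> nrm x + nrm y" using a by auto
  show "\<And>c x. nrm (c *\<^sub>R x) = \<bar>c\<bar> * nrm x" using a by auto
  show "\<And>x. nrm x = 0 \<longleftrightarrow> x = 0" using a by auto
  show sym: "\<And>x y. nrm (x - y) = nrm (y - x)" by (metis neg minus_diff_eq)
  show "\<And>x y. nrm (x - y) \<le> nrm x + nrm y" by (metis tri neg diff_conv_add_uminus)
  show "\<And>x y. \<bar>nrm x - nrm y\<bar> \<le> nrm (x - y)"
  proof -
    fix x y
    have "nrm x \<le> nrm (x - y) + nrm y" using tri[of "x-y" y] by simp
    moreover have "nrm y \<le> nrm (x - y) + nrm x" using tri[of "y-x" x] sym[of x y] by simp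
    ultimately show "\<bar>nrm x - nrm y\<bar> \<le> nrm (x - y)" by linarith
  qed
qed

lemma nrm_sum:
  assumes "is_norm nrm" "finite S"
  shows "nrm (sum g S) \<le> (\<Sum>i\<in>S. nrm (g i))"
  using assms(2)
proof (induction S rule: finite_induct)
  case empty then show ?case using nrm_props(1)[OF assms(1)] by simp
next
  case (insert x F)
  then show ?case using nrm_props(4)[OF assms(1), of "g x" "sum g F"] by simp
qed

lemma nrm_upper:
  assumes "is_norm nrm"
  shows "\<exists>C>0. \<forall>x. nrm x \<le> C * norm x"
proof -
  define C where "C = 1 + (\<Sum>b\<in>Basis. nrm (b::real^'a))"
  have C0: "C > 0" unfolding C_def using nrm_props(2)[OF assms] by (simp add: add_pos_nonneg sum_nonneg)
  have "nrm x \<le> C * norm x" for x :: "real^'a"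
  proof -
    have "nrm x = nrm (\<Sum>b\<in>Basis. (x \<bullet> b) *\<^sub>R b)" by (simp add: euclidean_representation)
    also have "\<dots> \<le> (\<Sum>b\<in>Basis. nrm ((x \<bullet> b) *\<^sub>R b))" by (rule nrm_sum[OF assms]) simp
    also have "\<dots> = (\<Sum>b\<in>Basis. \<bar>x \<bullet> b\<bar> * nrm b)" using nrm_props(5)[OF assms] by simp
    also have "\<dots> \<le> (\<Sum>b\<in>Basis. norm x * nrm b)"
      by (intro sum_mono mult_right_mono Basis_le_norm nrm_props(2)[OF assms])
    also have "\<dots> \<le> C * norm x" unfolding C_def by (simp add: sum_distrib_left algebra_simps)
    finally show ?thesis .
  qed
  then show ?thesis using C0 by blast
qed

lemma nrm_continuous:
  assumes "is_norm nrm"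
  shows "continuous_on UNIV nrm"
proof -
  obtain C where C: "C > 0" "\<And>x. nrm x \<le> C * norm x" using nrm_upper[OF assms] by blast
  have "C-lipschitz_on UNIV nrm"
  proof (rule lipschitz_onI)
    fix x y :: "real^'a"
    have "dist (nrm x) (nrm y) \<le> nrm (x - y)" using nrm_props(9)[OF assms] by (simp add: dist_real_def)
    also have "\<dots> \<le> C * dist x y" using C(2)[of "x-y"] by (simp add: dist_norm)
    finally show "dist (nrm x) (nrm y) \<le> C * dist x y" .
  qed (use C in auto)
  then show ?thesis by (rule lipschitz_on_continuous_on)
qed

lemma nrm_lower:
  assumes "is_norm nrm"
  shows "\<exists>c>0. \<forall>x. c * norm x \<le> nrm x"
proof -
  have cpt: "compact (sphere (0::real^'a) 1)" by simp
  have ne: "sphere (0::real^'a) 1 \<noteq> {}" by (simp add: sphere_eq_empty)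
  obtain x0 where x0: "x0 \<in> sphere (0::real^'a) 1" "\<And>y. y \<in> sphere 0 1 \<Longrightarrow> nrm x0 \<le> nrm y"
    using continuous_attains_inf[OF cpt ne continuous_on_subset[OF nrm_continuous[OF assms]]] by blast
  have m0: "nrm x0 > 0" using x0(1) nrm_props(2,6)[OF assms, of x0] by auto
  have "nrm x0 * norm x \<le> nrm x" for x
  proof (cases "x = 0")
    case True then show ?thesis by (simp add: nrm_props(1)[OF assms])
  next
    case False
    then have "(1 / norm x) *\<^sub>R x \<in> sphere 0 1" by simp
    then have "nrm x0 \<le> nrm ((1 / norm x) *\<^sub>R x)" by (rule x0(2))
    also have "\<dots> = nrm x / norm x" using nrm_props(5)[OF assms] by simp
    finally show ?thesis using False by (simp add: field_simps)
  qed
  then show ?thesis using m0 by blast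
qed

lemma mat_norm_bound:
  assumes "is_norm nrm"
  shows "nrm (M *v x) \<le> mat_norm nrm M * nrm x"
proof -
  obtain C where C: "C > 0" "\<And>x. nrm x \<le> C * norm x" using nrm_upper[OF assms] by blast
  obtain c where c: "c > 0" "\<And>x. c * norm x \<le> nrm x" using nrm_lower[OF assms] by blast
  obtain K where K: "\<And>x. norm (M *v x) \<le> norm x * K" "K > 0"
    using bounded_linear.pos_bounded[OF matrix_vector_mul_bounded_linear[of M]] by blast
  have bdd: "bdd_above ((\<lambda>x. nrm (M *v x)) ` {x. nrm x \<le> 1})"
  proof (rule bdd_aboveI2)
    fix x :: "real^'a" assume "x \<in> {x. nrm x \<le> 1}"
    then have "norm x \<le> 1 / c" using c(2)[of x] c(1) by (simp add: field_simps)
    then have "norm (M *v x) \<le> (1/c) * K" using K by (meson K(2) dual_order.trans less_imp_le mult_right_mono)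
    then show "nrm (M *v x) \<le> C * ((1/c) * K)" using C by (meson order.trans mult_left_mono less_imp_le)
  qed
  show ?thesis
  proof (cases "x = 0")
    case True then show ?thesis by (simp add: nrm_props(1)[OF assms])
  next
    case False
    then have nx: "nrm x > 0" using nrm_props(2,6)[OF assms, of x] by auto
    have "(1 / nrm x) *\<^sub>R x \<in> {x. nrm x \<le> 1}" using nx nrm_props(5)[OF assms] by simp
    then have "nrm (M *v ((1 / nrm x) *\<^sub>R x)) \<le> mat_norm nrm M"
      unfolding mat_norm_def by (rule cSUP_upper[OF _ bdd])
    moreover have "M *v ((1 / nrm x) *\<^sub>R x) = (1 / nrm x) *\<^sub>R (M *v x)"
      by (simp add: matrix_vector_mult_scaleR)
    ultimately have "nrm (M *v x) / nrm x \<le> mat_norm nrm M" using nrm_props(5)[OF assms] nx by simp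
    then show ?thesis using nx by (simp add: field_simps)
  qed
qed

lemma nrm_integral_le:
  fixes f :: "real \<Rightarrow> real^'a"
  assumes "is_norm nrm" "f integrable_on S" "g integrable_on S" "\<And>x. x \<in> S \<Longrightarrow> nrm (f x) \<le> g x"
  shows "nrm (integral S f) \<le> integral S g"
proof (rule ccontr)
  assume neg: "\<not> nrm (integral S f) \<le> integral S g"
  define v where "v = integral S f"
  define r where "r = integral S g"
  have r0: "0 \<le> r" unfolding r_def
    by (rule integral_nonneg[OF assms(3)]) (meson assms(4) nrm_props(2)[OF assms(1)] order.trans)
  have rv: "r < nrm v" using neg unfolding r_def v_def by simp
  define r' where "r' = (r + nrm v) / 2"
  have r': "r < r'" "r' < nrm v" "0 < r'" using rv r0 unfolding r'_def by auto
  define K where "K = {x::real^'a. nrm x \<le> r'}"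
  have cvx: "convex K" unfolding K_def convex_def
  proof (intro allI impI ballI, clarify)
    fix x y :: "real^'a" and u w :: real
    assume h: "nrm x \<le> r'" "nrm y \<le> r'" "0 \<le> u" "0 \<le> w" "u + w = 1"
    have "nrm (u *\<^sub>R x + w *\<^sub>R y) \<le> u * nrm x + w * nrm y"
      using nrm_props(4,5)[OF assms(1)] h(3,4) by (metis abs_of_nonneg)
    also have "\<dots> \<le> u * r' + w * r'" using h by (intro add_mono mult_left_mono) auto
    also have "\<dots> = r'" using h(5) by (metis distrib_right mult_1)
    finally show "nrm (u *\<^sub>R x + w *\<^sub>R y) \<le> r'" .
  qed
  have cl: "closed K" unfolding K_def
    by (rule closed_Collect_le) (auto intro: continuous_on_subset[OF nrm_continuous[OF assms(1)]])
  have "0 \<in> K" unfolding K_def using r' nrm_props(1)[OF assms(1)] by simp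
  then have ne: "K \<noteq> {}" by blast
  have vK: "v \<notin> K" unfolding K_def using r' by simp
  obtain a b where ab: "inner a v < b" "\<forall>x\<in>K. inner a x \<ge> b"
    using supporting_hyperplane_closed_point[OF cvx cl ne vK] by blast
  define B where "B = - b"
  have B0: "0 \<le> B" using ab(2) \<open>0 \<in> K\<close> unfolding B_def by force
  have phi: "- inner a x \<le> B / r' * nrm x" for x
  proof (cases "x = 0")
    case True then show ?thesis by (simp add: nrm_props(1)[OF assms(1)])
  next
    case False
    then have nx: "nrm x > 0" using nrm_props(2,6)[OF assms(1), of x] by auto
    have "(r' / nrm x) *\<^sub>R x \<in> K" unfolding K_def using nx r' nrm_props(5)[OF assms(1)] by simp
    then have "inner a ((r' / nrm x) *\<^sub>R x) \<ge> b" using ab(2) by blast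
    then have "(r' / nrm x) * inner a x \<ge> b" by simp
    then have "- inner a x \<le> B * nrm x / r'" unfolding B_def using nx r' by (simp add: field_simps)
    then show ?thesis by simp
  qed
  have bl: "bounded_linear (\<lambda>x::real^'a. - inner a x)" by (intro bounded_linear_minus bounded_linear_inner_right)
  have i1: "(\<lambda>x. B/r' * g x) integrable_on S" using integrable_cmul[OF assms(3), of "B/r'"] by simp
  have "- inner a v = integral S ((\<lambda>x. - inner a x) \<circ> f)" unfolding v_def
    by (rule integral_linear[OF assms(2) bl, symmetric])
  also have "\<dots> \<le> integral S (\<lambda>x. B / r' * g x)"
  proof (rule integral_le[OF integrable_linear[OF assms(2) bl] i1])
    fix x assume "x \<in> S"
    have "B / r' * nrm (f x) \<le> B / r' * g x" using assms(4)[OF \<open>x \<in> S\<close>] B0 r' by (intro mult_left_mono) auto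
    then show "((\<lambda>x. - inner a x) \<circ> f) x \<le> B / r' * g x" using phi[of "f x"] by simp
  qed
  also have "\<dots> = B / r' * r" unfolding r_def by simp
  also have "\<dots> \<le> B" using B0 r' r0 by (simp add: field_simps mult_left_mono)
  finally show False using ab(1) unfolding B_def by simp
qed



lemma deriv_nonpos_mono:
  fixes g :: "real \<Rightarrow> real"
  assumes "a \<le> b" "\<And>x. a \<le> x \<Longrightarrow> x \<le> b \<Longrightarrow> (g has_real_derivative g' x) (at x within {a..b})"
    "\<And>x. a \<le> x \<Longrightarrow> x \<le> b \<Longrightarrow> g' x \<le> 0"
  shows "g b \<le> g a"
proof -
  obtain x where x: "x \<in> {a..b}" "g b - g a = g' x * (b - a)"
    using mvt_very_simple[OF assms(1), of g "\<lambda>x. (*) (g' x)"] assms(2)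
    by (auto simp: has_field_derivative_def)
  have "g' x * (b - a) \<le> 0" using assms(3)[of x] x(1) assms(1) by (auto intro: mult_nonpos_nonneg)
  then show ?thesis using x by simp
qed

lemma lin_unique:
  fixes X :: "real \<Rightarrow> real^'n^'n" and A :: "real \<Rightarrow> real^'n^'n"
  assumes A: "continuous_on {0..} A"
    and D: "\<And>t. t \<ge> 0 \<Longrightarrow> (X has_vector_derivative A t ** X t) (at t within {0..})"
    and "s \<ge> 0" "X s = 0" "t \<ge> 0"
  shows "X t = 0"
proof -
  define a where "a = min s t"
  define b where "b = max s t"
  have ab: "0 \<le> a" "a \<le> b" "{a..b} \<subseteq> {0..}" using assms unfolding a_def b_def by auto
  have "compact (A ` {a..b})" by (rule compact_continuous_image[OF continuous_on_subset[OF A ab(3)]]) simp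
  then obtain M where M: "\<And>r. r \<in> {a..b} \<Longrightarrow> norm (A r) \<le> M" "M \<ge> 0"
    using compact_imp_bounded bounded_pos by (metis imageI less_imp_le)
  obtain K0 where K0: "\<And>(P :: real^'n^'n) (Q :: real^'n^'n). norm (P ** Q) \<le> norm P * norm Q * K0" "K0 > 0"
    using bounded_bilinear.pos_bounded[OF bb_mm] by blast
  define k where "k = M * K0"
  have k0: "k \<ge> 0" unfolding k_def using M K0 by simp
  define u where "u r = X r \<bullet> X r" for r
  have Du: "(u has_real_derivative 2 * (X r \<bullet> (A r ** X r))) (at r within {a..b})" if "r \<in> {a..b}" for r
  proof -
    have "(X has_vector_derivative A r ** X r) (at r within {a..b})"
      using D[of r] that ab by (auto intro: has_vector_derivative_within_subset)
    from bounded_bilinear.has_vector_derivative[OF bounded_bilinear_inner this this]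
    show ?thesis unfolding u_def has_real_derivative_iff_has_vector_derivative
      by (simp add: inner_commute)
  qed
  have bnd: "\<bar>X r \<bullet> (A r ** X r)\<bar> \<le> k * u r" if "r \<in> {a..b}" for r
  proof -
    have "\<bar>X r \<bullet> (A r ** X r)\<bar> \<le> norm (X r) * norm (A r ** X r)" by (rule Cauchy_Schwarz_ineq2)
    also have "\<dots> \<le> norm (X r) * (norm (A r) * norm (X r) * K0)" by (intro mult_left_mono K0(1)) simp
    also have "\<dots> \<le> norm (X r) * (M * norm (X r) * K0)"
      using M(1)[OF that] K0(2) by (intro mult_left_mono mult_right_mono) auto
    also have "\<dots> = k * u r" unfolding k_def u_def by (simp add: power2_norm_eq_inner[symmetric] power2_eq_square)
    finally show ?thesis .
  qed
  have u0: "u r \<ge> 0" for r unfolding u_def by simp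
  have "u t \<le> 0"
  proof (cases "s \<le> t")
    case True
    then have st: "a = s" "b = t" unfolding a_def b_def by auto
    define g where "g r = exp (- 2 * k * r) * u r" for r
    have "g b \<le> g a"
    proof (rule deriv_nonpos_mono[OF ab(2)])
      fix x assume x: "a \<le> x" "x \<le> b"
      show "(g has_real_derivative (exp (- 2 * k * x) * (- 2 * k) * u x + exp (- 2 * k * x) * (2 * (X x \<bullet> (A x ** X x))))) (at x within {a..b})"
        unfolding g_def by (rule derivative_eq_intros Du | use x in auto)+
      have "2 * (X x \<bullet> (A x ** X x)) \<le> 2 * k * u x" using bnd[of x] x by auto
      then show "exp (- 2 * k * x) * (- 2 * k) * u x + exp (- 2 * k * x) * (2 * (X x \<bullet> (A x ** X x))) \<le> 0"
        by (simp add: algebra_simps mult_left_mono)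
    qed
    then have "exp (- 2 * k * t) * u t \<le> 0" using assms(4) st unfolding g_def u_def by simp
    then show ?thesis by (simp add: mult_le_0_iff)
  next
    case False
    then have st: "a = t" "b = s" unfolding a_def b_def by auto
    define g where "g r = - exp (2 * k * r) * u r" for r
    have "g b \<le> g a"
    proof (rule deriv_nonpos_mono[OF ab(2)])
      fix x assume x: "a \<le> x" "x \<le> b"
      show "(g has_real_derivative (- (exp (2 * k * x) * (2 * k) * u x + exp (2 * k * x) * (2 * (X x \<bullet> (A x ** X x)))))) (at x within {a..b})"
        unfolding g_def by (rule derivative_eq_intros Du | use x in auto)+
      have "- 2 * k * u x \<le> 2 * (X x \<bullet> (A x ** X x))" using bnd[of x] x by auto
      then have nn: "0 \<le> exp (2 * k * x) * (2 * k * u x + 2 * (X x \<bullet> (A x ** X x)))"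
        by (intro mult_nonneg_nonneg) auto
      have "exp (2 * k * x) * (2 * k) * u x + exp (2 * k * x) * (2 * (X x \<bullet> (A x ** X x))) = exp (2 * k * x) * (2 * k * u x + 2 * (X x \<bullet> (A x ** X x)))"
        by (simp add: distrib_left mult.assoc)
      then show "- (exp (2 * k * x) * (2 * k) * u x + exp (2 * k * x) * (2 * (X x \<bullet> (A x ** X x)))) \<le> 0"
        using nn by linarith
    qed
    then have "exp (2 * k * t) * u t \<le> 0" using assms(4) st unfolding g_def u_def by simp
    then show ?thesis by (simp add: mult_le_0_iff)
  qed
  then have "u t = 0" using u0[of t] by simp
  then show ?thesis unfolding u_def by simp
qed



lemma tm_deriv:
  assumes "is_transition_matrix A T" "s \<ge> 0" "t \<ge> 0"
  shows "((\<lambda>r. T r s) has_vector_derivative (A t ** T t s)) (at t within {0..})"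
  using assms unfolding is_transition_matrix_def by auto

lemma tm_diag:
  assumes "is_transition_matrix A T" "s \<ge> 0"
  shows "T s s = mat 1"
  using assms unfolding is_transition_matrix_def by auto

lemma tm_cocycle:
  assumes A: "continuous_on {0..} A" and T: "is_transition_matrix A T"
    and "r \<ge> 0" "s \<ge> 0" "t \<ge> 0"
  shows "T t s ** T s r = T t r"
proof -
  define X where "X t = T t s ** T s r - T t r" for t
  have "X t = 0"
  proof (rule lin_unique[OF A _ \<open>s \<ge> 0\<close> _ \<open>t \<ge> 0\<close>])
    fix t :: real assume t: "t \<ge> 0"
    have d1: "((\<lambda>t. T t s ** T s r) has_vector_derivative ((A t ** T t s) ** T s r)) (at t within {0..})"
      by (rule bounded_linear.has_vector_derivative[OF bounded_bilinear.bounded_linear_left[OF bb_mm] tm_deriv[OF T \<open>s\<ge>0\<close> t]])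
    have "(X has_vector_derivative ((A t ** T t s) ** T s r - A t ** T t r)) (at t within {0..})"
      unfolding X_def by (rule has_vector_derivative_diff[OF d1 tm_deriv[OF T \<open>r\<ge>0\<close> t]])
    moreover have "(A t ** T t s) ** T s r - A t ** T t r = A t ** X t"
      unfolding X_def by (simp add: matrix_mul_assoc bounded_bilinear.diff_right[OF bb_mm])
    ultimately show "(X has_vector_derivative A t ** X t) (at t within {0..})" by simp
  next
    show "X s = 0" unfolding X_def using tm_diag[OF T \<open>s \<ge> 0\<close>] by simp
  qed
  then show ?thesis unfolding X_def by simp
qed

lemma tm_inv:
  assumes A: "continuous_on {0..} A" and T: "is_transition_matrix A T" and "t \<ge> 0" "s \<ge> 0"
  shows "T t s ** T s t = mat 1"
  using tm_cocycle[OF A T assms(3,4,3)] tm_diag[OF T assms(3)] by simp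

lemma tm_cont1:
  assumes T: "is_transition_matrix A T" and "s \<ge> 0"
  shows "continuous_on {0..} (\<lambda>t. T t s)"
  unfolding continuous_on_eq_continuous_within
  using has_vector_derivative_continuous[OF tm_deriv[OF T \<open>s\<ge>0\<close>]] by auto

lemma tm_cont2:
  fixes T :: "real \<Rightarrow> real \<Rightarrow> real^'n^'n"
  assumes A: "continuous_on {0..} A" and T: "is_transition_matrix A T" and "t \<ge> 0"
  shows "continuous_on {0..} (\<lambda>s. T t s)"
  unfolding continuous_on_eq_continuous_within
proof (intro ballI)
  fix s :: real assume "s \<in> {0..}"
  then have s0: "s \<ge> 0" by simp
  obtain K0 where K0: "\<And>(P :: real^'n^'n) (Q :: real^'n^'n). norm (P ** Q) \<le> norm P * norm Q * K0" "K0 > 0"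
    using bounded_bilinear.pos_bounded[OF bb_mm] by blast
  define E where "E s' = T s' s - mat 1" for s'
  have E0: "(E \<longlongrightarrow> 0) (at s within {0..})"
  proof -
    have "((\<lambda>s'. T s' s) \<longlongrightarrow> T s s) (at s within {0..})"
      using has_vector_derivative_continuous[OF tm_deriv[OF T s0 s0]] by (simp add: continuous_within)
    then show ?thesis unfolding E_def using tm_diag[OF T s0] by (simp add: LIM_zero_iff)
  qed
  have ev: "eventually (\<lambda>s'. norm (E s') < 1 / (2 * K0)) (at s within {0..})"
    using tendstoD[OF E0, of "1 / (2*K0)"] K0(2) by (simp add: dist_norm)
  have "eventually (\<lambda>s'. s' \<in> {0..}) (at s within {0..})" by (simp add: eventually_at_filter)
  with ev have ev2: "eventually (\<lambda>s'. norm (T t s' - T t s) \<le> 2 * K0 * norm (T t s) * norm (E s')) (at s within {0..})"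
  proof eventually_elim
    case (elim s')
    then have s'0: "s' \<ge> 0" by simp
    have cid: "T t s' ** T s' s = T t s" using tm_cocycle[OF A T s0 s'0 \<open>t\<ge>0\<close>] by simp
    have "T t s' ** E s' = T t s' ** T s' s - T t s' ** mat 1"
      unfolding E_def by (rule bounded_bilinear.diff_right[OF bb_mm])
    then have "T t s' ** E s' = T t s - T t s'" by (simp only: cid matrix_mul_rid)
    then have diff: "T t s - T t s' = T t s' ** E s'" by (rule sym)
    have e: "T t s - T t s' ** E s' = T t s'" by (simp add: diff[symmetric])
    have "norm (T t s - T t s' ** E s') \<le> norm (T t s) + norm (T t s' ** E s')" by (rule norm_triangle_ineq4)
    then have "norm (T t s') \<le> norm (T t s) + norm (T t s' ** E s')" by (simp only: e)
    also have "\<dots> \<le> norm (T t s) + norm (T t s') * norm (E s') * K0" using K0(1) by simp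
    also have "\<dots> \<le> norm (T t s) + norm (T t s') * (1/2)"
    proof -
      have "norm (E s') * K0 \<le> 1/2" using elim K0(2) by (simp add: field_simps)
      then have "norm (T t s') * (norm (E s') * K0) \<le> norm (T t s') * (1/2)" by (intro mult_left_mono) auto
      then show ?thesis by (simp add: mult.assoc)
    qed
    finally have nb: "norm (T t s') \<le> 2 * norm (T t s)" by simp
    have "norm (T t s' - T t s) = norm (T t s' ** E s')" by (simp only: norm_minus_commute[of "T t s'"] diff)
    also have "\<dots> \<le> norm (T t s') * norm (E s') * K0" by (rule K0(1))
    also have "\<dots> \<le> 2 * norm (T t s) * norm (E s') * K0"
      using nb K0(2) by (intro mult_right_mono) auto
    finally show ?case by (simp add: algebra_simps)
  qed
  have "((\<lambda>s'. 2 * K0 * norm (T t s) * norm (E s')) \<longlongrightarrow> 2 * K0 * norm (T t s) * norm (0::real^'n^'n)) (at s within {0..})"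
    by (intro tendsto_intros E0)
  then have "((\<lambda>s'. T t s' - T t s) \<longlongrightarrow> 0) (at s within {0..})"
    using Lim_null_comparison[OF ev2] by simp
  then show "continuous (at s within {0..}) (\<lambda>s. T t s)"
    by (simp add: continuous_within LIM_zero_iff)
qed



lemma ivl_sub: "ivl \<tau> \<subseteq> {0..}" unfolding ivl_def by auto

lemma ivl_cases:
  assumes "\<tau> > 0" shows "ivl \<tau> = {0..} \<or> (\<exists>r>0. ivl \<tau> = {0..<r})"
proof (cases \<tau>)
  case (real r)
  then have "r > 0" using assms by (simp add: zero_ereal_def)
  moreover have "ivl \<tau> = {0..<r}" using real unfolding ivl_def by auto
  ultimately show ?thesis by blast
next
  case PInf
  then have "ivl \<tau> = {0..}" unfolding ivl_def by auto
  then show ?thesis by blast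
next
  case MInf
  then show ?thesis using assms by simp
qed

lemma ivl_lebesgue:
  assumes "\<tau> > 0" shows "ivl \<tau> \<in> sets lebesgue"
proof -
  consider "ivl \<tau> = {0..}" | r where "ivl \<tau> = {0..<r}" using ivl_cases[OF assms] by blast
  then show ?thesis by cases simp_all
qed

lemma ivl_lebesgue2: "\<tau> > 0 \<Longrightarrow> ivl \<tau> \<inter> {t<..} \<in> sets lebesgue"
  using ivl_lebesgue[of \<tau>] by (intro sets.Int) auto

lemma ivl_Icc: "t \<in> ivl \<tau> \<Longrightarrow> {0..t} \<subseteq> ivl \<tau>"
proof
  fix x assume "t \<in> ivl \<tau>" "x \<in> {0..t}"
  then have "ereal x \<le> ereal t" "ereal t < \<tau>" "0 \<le> x" unfolding ivl_def by auto
  then have "ereal x < \<tau>" using le_less_trans by blast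
  then show "x \<in> ivl \<tau>" unfolding ivl_def using \<open>0 \<le> x\<close> by auto
qed

lemma ivl_right: "t \<in> ivl \<tau> \<Longrightarrow> \<exists>t'. t < t' \<and> t' \<in> ivl \<tau>"
proof -
  assume "t \<in> ivl \<tau>"
  then have "ereal t < \<tau>" "0 \<le> t" unfolding ivl_def by auto
  then obtain z where "ereal t < ereal z" "ereal z < \<tau>" using ereal_dense2 by blast
  then show ?thesis using \<open>0 \<le> t\<close> unfolding ivl_def by auto
qed

lemma ivl_zero: "\<tau> > 0 \<Longrightarrow> 0 \<in> ivl \<tau>" unfolding ivl_def by (simp add: zero_ereal_def)

lemma exp_integrable_sub:
  fixes lam K c :: real
  assumes "lam > 0" "0 \<le> K" "S \<subseteq> {c..}" "S \<in> sets lebesgue"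
  shows "(\<lambda>s. K * exp (- lam * s)) integrable_on S"
proof -
  have "(\<lambda>s. exp (- lam * s)) integrable_on {c..}" by (rule integrable_on_exp_minus_to_infinity[OF assms(1)])
  then have "(\<lambda>s. K * exp (- lam * s)) integrable_on {c..}" unfolding integrable_on_def using has_integral_mult_right by blast
  then have "(\<lambda>s. K * exp (- lam * s)) absolutely_integrable_on {c..}"
    using assms(2) by (intro nonnegative_absolutely_integrable_1) auto
  then have "(\<lambda>s. K * exp (- lam * s)) absolutely_integrable_on S"
    by (rule set_integrable_subset) (use assms in auto)
  then show ?thesis using set_lebesgue_integral_eq_integral(1) by blast
qed

lemma exp_integral_inf:
  fixes lam K c :: real
  assumes "lam > 0"
  shows "integral {c..} (\<lambda>s. K * exp (- lam * s)) = K * exp (- lam * c) / lam"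
proof -
  have "((\<lambda>s. exp (- lam * s)) has_integral exp (- lam * c) / lam) {c..}"
    by (rule has_integral_exp_minus_to_infinity[OF assms])
  then have "((\<lambda>s. K * exp (- lam * s)) has_integral K * (exp (- lam * c) / lam)) {c..}"
    by (rule has_integral_mult_right)
  then have "integral {c..} (\<lambda>s. K * exp (- lam * s)) = K * (exp (- lam * c) / lam)"
    by (rule integral_unique)
  then show ?thesis by simp
qed

lemma exp_integral_fin:
  fixes lam K t :: real
  assumes "lam > 0" "0 \<le> t"
  shows "((\<lambda>s. K * exp (- lam * (t - s))) has_integral (K / lam - K * exp (- lam * t) / lam)) {0..t}"
proof -
  have R: "((\<lambda>s. K * exp (- lam * (t - s))) has_integral (K * exp (- lam * (t - t)) / lam - K * exp (- lam * (t - 0)) / lam)) {0..t}"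
  proof (rule fundamental_theorem_of_calculus[OF assms(2), of "\<lambda>s. K * exp (- lam * (t - s)) / lam"])
    fix x assume "x \<in> {0..t}"
    have "lam \<noteq> 0" using assms by simp
    have "((\<lambda>s. K * exp (- lam * (t - s)) / lam) has_real_derivative K * exp (- lam * (t - x))) (at x within {0..t})"
      by (rule derivative_eq_intros refl)+ (use \<open>lam \<noteq> 0\<close> in \<open>simp_all add: field_simps power2_eq_square\<close>)
    then show "((\<lambda>s. K * exp (- lam * (t - s)) / lam) has_vector_derivative K * exp (- lam * (t - x))) (at x within {0..t})"
      by (simp add: has_real_derivative_iff_has_vector_derivative)
  qed
  have eq: "K * exp (- lam * (t - t)) / lam - K * exp (- lam * (t - 0)) / lam = K / lam - K * exp (- lam * t) / lam"
    by simp
  show ?thesis by (subst eq[symmetric]) (rule R)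
qed



locale green =
  fixes nrm :: "real^'n \<Rightarrow> real" and A :: "real \<Rightarrow> real^'n^'n" and T :: "real \<Rightarrow> real \<Rightarrow> real^'n^'n"
    and P :: "real \<Rightarrow> real^'n^'n" and a b lam :: real
  assumes nrm: "is_norm nrm" and Acont: "continuous_on {0..} A" and T: "is_transition_matrix A T"
    and comm: "\<And>t s. 0 \<le> t \<Longrightarrow> 0 \<le> s \<Longrightarrow> P t ** T t s = T t s ** P s"
    and a0: "0 \<le> a" and b0: "0 \<le> b" and lam: "0 < lam"
    and bndP: "\<And>t s v. 0 \<le> s \<Longrightarrow> s \<le> t \<Longrightarrow> nrm (T t s *v (P s *v v)) \<le> a * exp (- lam * (t - s)) * nrm v"
    and bndQ: "\<And>t s v. 0 \<le> t \<Longrightarrow> t \<le> s \<Longrightarrow> nrm (T t s *v ((mat 1 - P s) *v v)) \<le> b * exp (- lam * (s - t)) * nrm v"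
begin

lemma I0: "0 \<le> t \<Longrightarrow> 0 \<le> s \<Longrightarrow> T t s *v v = T t 0 *v (T 0 s *v v)"
  using tm_cocycle[OF Acont T, of s 0 t] by (simp add: matrix_vector_mul_assoc)

lemma I1:
  assumes "0 \<le> t" "0 \<le> s"
  shows "T t s *v (P s *v v) = T t 0 *v (P 0 *v (T 0 s *v v))"
proof -
  have c: "T 0 s ** P s = P 0 ** T 0 s" using comm[of 0 s] assms by simp
  have "T t s *v (P s *v v) = T t 0 *v (T 0 s *v (P s *v v))" by (rule I0[OF assms])
  also have "\<dots> = T t 0 *v ((T 0 s ** P s) *v v)" by (simp only: matrix_vector_mul_assoc)
  also have "\<dots> = T t 0 *v ((P 0 ** T 0 s) *v v)" by (simp only: c)
  also have "\<dots> = T t 0 *v (P 0 *v (T 0 s *v v))" by (simp only: matrix_vector_mul_assoc)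
  finally show ?thesis .
qed

lemma I2:
  assumes "0 \<le> t" "0 \<le> s"
  shows "T t s *v ((mat 1 - P s) *v v) = T t 0 *v ((mat 1 - P 0) *v (T 0 s *v v))"
proof -
  have "T t s *v ((mat 1 - P s) *v v) = T t s *v v - T t s *v (P s *v v)"
    by (simp add: matrix_vector_mult_diff_rdistrib matrix_vector_mult_diff_distrib)
  also have "\<dots> = T t 0 *v (T 0 s *v v) - T t 0 *v (P 0 *v (T 0 s *v v))"
    using I0[OF assms] I1[OF assms] by simp
  also have "\<dots> = T t 0 *v ((mat 1 - P 0) *v (T 0 s *v v))"
    by (simp add: matrix_vector_mult_diff_rdistrib matrix_vector_mult_diff_distrib)
  finally show ?thesis .
qed

definition w :: "(real \<Rightarrow> real^'n) \<Rightarrow> real \<Rightarrow> real^'n" where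
  "w h s = (mat 1 - P 0) *v (T 0 s *v h s)"

definition Gam :: "ereal \<Rightarrow> (real \<Rightarrow> real^'n) \<Rightarrow> real \<Rightarrow> real^'n" where
  "Gam \<tau> h t = T t 0 *v (integral {0..t} (\<lambda>s. T 0 s *v h s) - integral (ivl \<tau>) (w h))"

lemma w_bound: "0 \<le> s \<Longrightarrow> nrm (w h s) \<le> b * exp (- lam * s) * nrm (h s)"
  using I2[of 0 s "h s"] bndQ[of 0 s "h s"] tm_diag[OF T, of 0] unfolding w_def by simp

lemma g1_cont:
  assumes "continuous_on (ivl \<tau>) h"
  shows "continuous_on (ivl \<tau>) (\<lambda>s. T 0 s *v h s)"
  using bounded_bilinear.continuous_on[OF bb_mv continuous_on_subset[OF tm_cont2[OF Acont T, of 0] ivl_sub] assms]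
  by simp

lemma w_cont:
  assumes "continuous_on (ivl \<tau>) h"
  shows "continuous_on (ivl \<tau>) (w h)"
  unfolding w_def by (rule bounded_linear.continuous_on[OF matrix_vector_mul_bounded_linear g1_cont[OF assms]])

lemma w_absint:
  assumes "\<tau> > 0" "continuous_on (ivl \<tau>) h" "\<And>s. s \<in> ivl \<tau> \<Longrightarrow> nrm (h s) \<le> M" "0 \<le> M"
  shows "w h absolutely_integrable_on ivl \<tau>"
proof -
  obtain c where c: "c > 0" "\<And>x. c * norm x \<le> nrm x" using nrm_lower[OF nrm] by blast
  show ?thesis
  proof (rule measurable_bounded_by_integrable_imp_absolutely_integrable)
    show "w h \<in> borel_measurable (lebesgue_on (ivl \<tau>))"
      by (rule continuous_imp_measurable_on_sets_lebesgue[OF w_cont[OF assms(2)] ivl_lebesgue[OF assms(1)]])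
    show "ivl \<tau> \<in> sets lebesgue" by (rule ivl_lebesgue[OF assms(1)])
    show "(\<lambda>s. (b * M / c) * exp (- lam * s)) integrable_on ivl \<tau>"
      by (rule exp_integrable_sub[OF lam _ ivl_sub ivl_lebesgue[OF assms(1)]]) (use b0 assms(4) c(1) in simp)
    fix s assume s: "s \<in> ivl \<tau>"
    have s0: "0 \<le> s" using s unfolding ivl_def by simp
    have "c * norm (w h s) \<le> nrm (w h s)" by (rule c(2))
    also have "\<dots> \<le> b * exp (- lam * s) * nrm (h s)" by (rule w_bound[OF s0])
    also have "\<dots> \<le> b * exp (- lam * s) * M" using assms(3)[OF s] b0 by (intro mult_left_mono) auto
    finally show "norm (w h s) \<le> (b * M / c) * exp (- lam * s)" using c(1) by (simp add: field_simps)
  qed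
qed

lemma absint_sub:
  fixes f :: "real \<Rightarrow> real^'m" and S U :: "real set"
  assumes "f absolutely_integrable_on S" "U \<in> sets lebesgue" "U \<subseteq> S"
  shows "f integrable_on U"
  by (rule set_lebesgue_integral_eq_integral(1)[OF set_integrable_subset[OF assms]])

lemma Gam_deriv:
  assumes "\<tau> > 0" "continuous_on (ivl \<tau>) h" "t \<in> ivl \<tau>"
  shows "(Gam \<tau> h has_vector_derivative (A t *v Gam \<tau> h t + h t)) (at t within ivl \<tau>)"
proof -
  define g1 where "g1 s = T 0 s *v h s" for s
  define c where "c = integral (ivl \<tau>) (w h)"
  have t0: "0 \<le> t" using assms(3) unfolding ivl_def by simp
  obtain t' where t': "t < t'" "t' \<in> ivl \<tau>" using ivl_right[OF assms(3)] by blast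
  have sub: "{0..t'} \<subseteq> ivl \<tau>" by (rule ivl_Icc[OF t'(2)])
  have cg1: "continuous_on {0..t'} g1"
    unfolding g1_def by (rule continuous_on_subset[OF g1_cont[OF assms(2)] sub])
  have "((\<lambda>u. integral {0..u} g1) has_vector_derivative g1 t) (at t within {0..t'})"
    by (rule integral_has_vector_derivative[OF cg1]) (use t0 t' in simp)
  then have d1: "((\<lambda>u. integral {0..u} g1) has_vector_derivative g1 t) (at t within ivl \<tau> \<inter> {..<t'})"
    by (rule has_vector_derivative_within_subset) (auto simp: ivl_def)
  have "at t within ivl \<tau> \<inter> {..<t'} = at t within ivl \<tau>"
    by (rule at_within_nhd[of t "{..<t'}"]) (use t' in auto)
  with d1 have d2: "((\<lambda>u. integral {0..u} g1 - c) has_vector_derivative g1 t) (at t within ivl \<tau>)"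
    using has_vector_derivative_diff[OF _ has_vector_derivative_const, of _ "g1 t"] by fastforce
  have dP: "((\<lambda>u. T u 0) has_vector_derivative A t ** T t 0) (at t within ivl \<tau>)"
    by (rule has_vector_derivative_within_subset[OF tm_deriv[OF T order.refl t0] ivl_sub])
  have "((\<lambda>u. T u 0 *v (integral {0..u} g1 - c)) has_vector_derivative
      (T t 0 *v g1 t + (A t ** T t 0) *v (integral {0..t} g1 - c))) (at t within ivl \<tau>)"
    by (rule bounded_bilinear.has_vector_derivative[OF bb_mv dP d2])
  moreover have "Gam \<tau> h = (\<lambda>u. T u 0 *v (integral {0..u} g1 - c))"
    unfolding Gam_def g1_def c_def by (rule ext) simp
  moreover have "T t 0 *v g1 t = h t"
    unfolding g1_def using tm_inv[OF Acont T t0 order.refl] by (simp add: matrix_vector_mul_assoc)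
  moreover have "(A t ** T t 0) *v (integral {0..t} g1 - c) = A t *v Gam \<tau> h t"
    unfolding Gam_def g1_def c_def by (simp add: matrix_vector_mul_assoc)
  ultimately show ?thesis by (simp add: add.commute)
qed

lemma Gam_cont:
  assumes "\<tau> > 0" "continuous_on (ivl \<tau>) h"
  shows "continuous_on (ivl \<tau>) (Gam \<tau> h)"
  unfolding continuous_on_eq_continuous_within
  using has_vector_derivative_continuous[OF Gam_deriv[OF assms]] by blast

lemma Gam_bound:
  assumes tau: "\<tau> > 0" and hc: "continuous_on (ivl \<tau>) h"
    and hM: "\<And>s. s \<in> ivl \<tau> \<Longrightarrow> nrm (h s) \<le> M" and M0: "0 \<le> M" and t: "t \<in> ivl \<tau>"
  shows "nrm (Gam \<tau> h t) \<le> (a + b) / lam * M"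
proof -
  define g1 where "g1 s = T 0 s *v h s" for s
  define p where "p s = P 0 *v g1 s" for s
  have t0: "0 \<le> t" using t unfolding ivl_def by simp
  have sub: "{0..t} \<subseteq> ivl \<tau>" by (rule ivl_Icc[OF t])
  have cg1: "continuous_on {0..t} g1"
    unfolding g1_def by (rule continuous_on_subset[OF g1_cont[OF hc] sub])
  have ip: "p integrable_on {0..t}" unfolding p_def
    by (rule integrable_continuous_real, rule bounded_linear.continuous_on[OF matrix_vector_mul_bounded_linear cg1])
  have wabs: "w h absolutely_integrable_on ivl \<tau>" by (rule w_absint[OF tau hc hM M0])
  have iw0: "w h integrable_on {0..t}" by (rule absint_sub[OF wabs _ sub]) simp
  have iw1: "w h integrable_on (ivl \<tau> \<inter> {t<..})" by (rule absint_sub[OF wabs ivl_lebesgue2[OF tau]]) auto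
  have "g1 s = p s + w h s" for s
    unfolding p_def g1_def w_def by (simp add: matrix_vector_mult_diff_rdistrib)
  then have "integral {0..t} g1 = integral {0..t} (\<lambda>s. p s + w h s)" by presburger
  also have "\<dots> = integral {0..t} p + integral {0..t} (w h)" by (rule integral_add[OF ip iw0])
  finally have split1: "integral {0..t} g1 = integral {0..t} p + integral {0..t} (w h)" .
  have "(w h has_integral (integral {0..t} (w h) + integral (ivl \<tau> \<inter> {t<..}) (w h))) ({0..t} \<union> (ivl \<tau> \<inter> {t<..}))"
  proof (rule has_integral_Un[OF integrable_integral[OF iw0] integrable_integral[OF iw1]])
    have "{0..t} \<inter> (ivl \<tau> \<inter> {t<..}) = {}" by auto
    then show "negligible ({0..t} \<inter> (ivl \<tau> \<inter> {t<..}))" by simp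
  qed
  moreover have "{0..t} \<union> (ivl \<tau> \<inter> {t<..}) = ivl \<tau>" using sub by (auto simp: ivl_def)
  ultimately have split2: "integral (ivl \<tau>) (w h) = integral {0..t} (w h) + integral (ivl \<tau> \<inter> {t<..}) (w h)"
    using integral_unique by metis
  define I1 where "I1 = integral {0..t} (\<lambda>s. T t 0 *v p s)"
  define I2 where "I2 = integral (ivl \<tau> \<inter> {t<..}) (\<lambda>s. T t 0 *v w h s)"
  have "Gam \<tau> h t = T t 0 *v (integral {0..t} p - integral (ivl \<tau> \<inter> {t<..}) (w h))"
    unfolding Gam_def g1_def[symmetric] using split1 split2 by simp
  also have "\<dots> = T t 0 *v integral {0..t} p - T t 0 *v integral (ivl \<tau> \<inter> {t<..}) (w h)"
    by (simp add: matrix_vector_mult_diff_distrib)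
  also have "\<dots> = I1 - I2"
    unfolding I1_def I2_def
    using integral_linear[OF ip matrix_vector_mul_bounded_linear[of "T t 0"]]
      integral_linear[OF iw1 matrix_vector_mul_bounded_linear[of "T t 0"]]
    by (simp add: o_def)
  finally have G: "Gam \<tau> h t = I1 - I2" .
  have "nrm I1 \<le> a * M / lam"
  proof -
    have hi: "((\<lambda>s. (a * M) * exp (- lam * (t - s))) has_integral ((a * M) / lam - (a * M) * exp (- lam * t) / lam)) {0..t}"
      by (rule exp_integral_fin[OF lam t0])
    have "nrm I1 \<le> integral {0..t} (\<lambda>s. (a * M) * exp (- lam * (t - s)))"
      unfolding I1_def
    proof (rule nrm_integral_le[OF nrm])
      show "(\<lambda>s. T t 0 *v p s) integrable_on {0..t}"
        using integrable_linear[OF ip matrix_vector_mul_bounded_linear[of "T t 0"]] by (simp add: o_def)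
      show "(\<lambda>s. (a * M) * exp (- lam * (t - s))) integrable_on {0..t}" using hi by blast
      fix s assume s: "s \<in> {0..t}"
      have "T t 0 *v p s = T t s *v (P s *v h s)" unfolding p_def g1_def using I1[of t s "h s"] s t0 by simp
      also have "nrm \<dots> \<le> a * exp (- lam * (t - s)) * nrm (h s)" by (rule bndP) (use s in auto)
      also have "\<dots> \<le> a * exp (- lam * (t - s)) * M" using hM[of s] s sub a0 by (intro mult_left_mono) auto
      finally show "nrm (T t 0 *v p s) \<le> (a * M) * exp (- lam * (t - s))" by (simp add: algebra_simps)
    qed
    also have "\<dots> = (a * M) / lam - (a * M) * exp (- lam * t) / lam" using hi by (rule integral_unique)
    also have "\<dots> \<le> a * M / lam" using a0 M0 lam by (simp add: divide_nonneg_pos)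
    finally show ?thesis .
  qed
  moreover have "nrm I2 \<le> b * M / lam"
  proof -
    define K where "K = b * M * exp (lam * t)"
    have K0: "0 \<le> K" unfolding K_def using b0 M0 by simp
    have int1: "(\<lambda>s. K * exp (- lam * s)) integrable_on (ivl \<tau> \<inter> {t<..})"
      by (rule exp_integrable_sub[OF lam K0 _ ivl_lebesgue2[OF tau], where c=t]) auto
    have int2: "(\<lambda>s. K * exp (- lam * s)) integrable_on {t..}"
      by (rule exp_integrable_sub[OF lam K0 order.refl]) simp
    have "nrm I2 \<le> integral (ivl \<tau> \<inter> {t<..}) (\<lambda>s. K * exp (- lam * s))"
      unfolding I2_def
    proof (rule nrm_integral_le[OF nrm _ int1])
      show "(\<lambda>s. T t 0 *v w h s) integrable_on (ivl \<tau> \<inter> {t<..})"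
        using integrable_linear[OF iw1 matrix_vector_mul_bounded_linear[of "T t 0"]] by (simp add: o_def)
      fix s assume s: "s \<in> ivl \<tau> \<inter> {t<..}"
      then have s0: "0 \<le> s" "t \<le> s" "s \<in> ivl \<tau>" unfolding ivl_def by auto
      have "T t 0 *v w h s = T t s *v ((mat 1 - P s) *v h s)" unfolding w_def using I2[of t s "h s"] s0 t0 by simp
      also have "nrm \<dots> \<le> b * exp (- lam * (s - t)) * nrm (h s)" by (rule bndQ) (use s0 t0 in auto)
      also have "\<dots> \<le> b * exp (- lam * (s - t)) * M" using hM[OF s0(3)] b0 by (intro mult_left_mono) auto
      also have "\<dots> = K * exp (- lam * s)" unfolding K_def by (simp add: algebra_simps exp_diff exp_minus field_simps)
      finally show "nrm (T t 0 *v w h s) \<le> K * exp (- lam * s)" .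
    qed
    also have "\<dots> \<le> integral {t..} (\<lambda>s. K * exp (- lam * s))"
      by (rule integral_subset_le[OF _ int1 int2]) (use K0 in auto)
    also have "\<dots> = K * exp (- lam * t) / lam" by (rule exp_integral_inf[OF lam])
    also have "\<dots> = b * M / lam" unfolding K_def by (simp add: exp_minus field_simps)
    finally show ?thesis .
  qed
  moreover have "(a + b) / lam * M = a * M / lam + b * M / lam" by (simp add: add_divide_distrib distrib_right)
  ultimately have "nrm I1 + nrm I2 \<le> (a + b) / lam * M" by linarith
  moreover have "nrm (Gam \<tau> h t) \<le> nrm I1 + nrm I2" unfolding G by (rule nrm_props(8)[OF nrm])
  ultimately show ?thesis by linarith
qed

lemma Gam_diff:
  assumes tau: "\<tau> > 0" and c1: "continuous_on (ivl \<tau>) h1" and c2: "continuous_on (ivl \<tau>) h2"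
    and M1: "\<And>s. s \<in> ivl \<tau> \<Longrightarrow> nrm (h1 s) \<le> M1" "0 \<le> M1"
    and M2: "\<And>s. s \<in> ivl \<tau> \<Longrightarrow> nrm (h2 s) \<le> M2" "0 \<le> M2"
    and t: "t \<in> ivl \<tau>"
  shows "Gam \<tau> (\<lambda>s. h1 s - h2 s) t = Gam \<tau> h1 t - Gam \<tau> h2 t"
proof -
  have sub: "{0..t} \<subseteq> ivl \<tau>" by (rule ivl_Icc[OF t])
  have i1: "(\<lambda>s. T 0 s *v h1 s) integrable_on {0..t}"
    by (rule integrable_continuous_real, rule continuous_on_subset[OF g1_cont[OF c1] sub])
  have i2: "(\<lambda>s. T 0 s *v h2 s) integrable_on {0..t}"
    by (rule integrable_continuous_real, rule continuous_on_subset[OF g1_cont[OF c2] sub])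
  have w1: "w h1 integrable_on ivl \<tau>"
    by (rule set_lebesgue_integral_eq_integral(1)[OF w_absint[OF tau c1 M1]])
  have w2: "w h2 integrable_on ivl \<tau>"
    by (rule set_lebesgue_integral_eq_integral(1)[OF w_absint[OF tau c2 M2]])
  have e1: "(\<lambda>s. T 0 s *v (h1 s - h2 s)) = (\<lambda>s. T 0 s *v h1 s - T 0 s *v h2 s)"
    by (simp add: matrix_vector_mult_diff_distrib)
  have e2: "w (\<lambda>s. h1 s - h2 s) = (\<lambda>s. w h1 s - w h2 s)"
    unfolding w_def by (simp add: matrix_vector_mult_diff_distrib)
  show ?thesis
    unfolding Gam_def e1 e2 integral_diff[OF i1 i2] integral_diff[OF w1 w2]
    by (simp add: matrix_vector_mult_diff_distrib algebra_simps)
qed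

end


context green
begin

lemma shadow_one:
  fixes f :: "real \<Rightarrow> real^'n \<Rightarrow> real^'n" and y :: "real \<Rightarrow> real^'n"
  assumes fc: "continuous_on ({0..} \<times> UNIV) (\<lambda>(t, x). f t x)"
    and lip: "\<forall>t\<ge>0. \<forall>x1\<in>nball nrm 0 (\<rho> + \<delta>). \<forall>x2\<in>nball nrm 0 (\<rho> + \<delta>).
           nrm (f t x1 - f t x2) \<le> L * nrm (x1 - x2)"
    and L0: "0 \<le> L" and q1: "(a + b) / lam * L < 1" and apos: "0 < a + b"
    and tau: "\<tau> > 0" and eps: "0 < \<epsilon>" "(a + b) / lam / (1 - (a + b) / lam * L) * \<epsilon> \<le> \<delta>"
    and yps: "is_pseudosolution nrm (\<lambda>t x. A t *v x + f t x) \<tau> y"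
    and yerr: "pseudo_err nrm (\<lambda>t x. A t *v x + f t x) \<tau> y \<le> \<epsilon>"
    and yin: "\<forall>t\<in>ivl \<tau>. y t \<in> nball nrm 0 \<rho>"
  shows "\<exists>x. is_solution (\<lambda>t x. A t *v x + f t x) \<tau> x \<and>
            (\<forall>t\<in>ivl \<tau>. nrm (x t - y t) \<le> (a + b) / lam / (1 - (a + b) / lam * L) * \<epsilon>)"
proof -
  define S where "S = ivl \<tau>"
  define K where "K = (a + b) / lam"
  define q where "q = K * L"
  define \<kappa> where "\<kappa> = K / (1 - q)"
  have K0: "K > 0" unfolding K_def using apos lam by simp
  have q0: "0 \<le> q" "q < 1" unfolding q_def using K0 L0 q1 mult_nonneg_nonneg[of K L] unfolding K_def by auto
  have kap0: "\<kappa> > 0" unfolding \<kappa>_def using K0 q0 by simp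
  have kapeq: "K * (L * (\<kappa> * \<epsilon>) + \<epsilon>) = \<kappa> * \<epsilon>"
  proof -
    have "1 - q \<noteq> 0" using q0 by simp
    then have "\<kappa> * (1 - q) = K" unfolding \<kappa>_def by simp
    then have "\<kappa> = K + q * \<kappa>" by (simp add: algebra_simps)
    then have h: "\<kappa> = K + K * (L * \<kappa>)" unfolding q_def by (simp add: mult.assoc)
    have "K * (L * (\<kappa> * \<epsilon>) + \<epsilon>) = (K + K * (L * \<kappa>)) * \<epsilon>" by (simp add: algebra_simps)
    also have "\<dots> = \<kappa> * \<epsilon>" by (simp only: h[symmetric])
    finally show ?thesis .
  qed
  have kd: "\<kappa> * \<epsilon> \<le> \<delta>" using eps(2) unfolding \<kappa>_def q_def K_def by simp
  have Ssub: "\<And>t. t \<in> S \<Longrightarrow> 0 \<le> t" unfolding S_def ivl_def by simp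
  obtain c where c: "c > 0" "\<And>x. c * norm x \<le> nrm x" using nrm_lower[OF nrm] by blast
  obtain C where C: "C > 0" "\<And>x. nrm x \<le> C * norm x" using nrm_upper[OF nrm] by blast
  note np = nrm_props[OF nrm]
  define y' where "y' t = vector_derivative y (at t within S)" for t
  have ydiff: "\<And>t. t \<in> S \<Longrightarrow> y differentiable (at t within S)"
    using yps unfolding is_pseudosolution_def S_def by blast
  have yder: "\<And>t. t \<in> S \<Longrightarrow> (y has_vector_derivative y' t) (at t within S)"
    unfolding y'_def using ydiff vector_derivative_works by blast
  have ycont: "continuous_on S y"
    unfolding continuous_on_eq_continuous_within
    using ydiff differentiable_imp_continuous_within by blast
  have y'cont: "continuous_on S y'" using yps unfolding is_pseudosolution_def S_def y'_def by blast
  define e where "e t = y' t - (A t *v y t + f t (y t))" for t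
  have ebnd: "\<And>t. t \<in> S \<Longrightarrow> nrm (e t) \<le> \<epsilon>"
  proof -
    fix t assume t: "t \<in> S"
    have bdd: "bdd_above ((\<lambda>t. nrm (vector_derivative y (at t within ivl \<tau>) - (A t *v y t + f t (y t)))) ` ivl \<tau>)"
      using yps unfolding is_pseudosolution_def by simp
    have "nrm (e t) \<le> pseudo_err nrm (\<lambda>t x. A t *v x + f t x) \<tau> y"
      unfolding pseudo_err_def e_def y'_def S_def
      by (rule cSUP_upper[OF _ bdd]) (use t S_def in simp)
    then show "nrm (e t) \<le> \<epsilon>" using yerr by simp
  qed
  have Acs: "continuous_on S A" using continuous_on_subset[OF Acont] ivl_sub unfolding S_def by blast
  have fcomp: "continuous_on S (\<lambda>t. f t (u t))" if "continuous_on S u" for u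
  proof -
    have "continuous_on S (\<lambda>t. (t, u t))" by (intro continuous_intros that)
    moreover have "(\<lambda>t. (t, u t)) ` S \<subseteq> {0..} \<times> UNIV" using Ssub by auto
    ultimately have "continuous_on S (\<lambda>t. (\<lambda>(t, x). f t x) (t, u t))"
      by (rule continuous_on_compose2[OF fc])
    then show ?thesis by simp
  qed
  have econt: "continuous_on S e"
    unfolding e_def
    by (intro continuous_on_diff continuous_on_add y'cont fcomp ycont
        bounded_bilinear.continuous_on[OF bb_mv Acs ycont])
  define hz where "hz z t = f t (y t + z t) - f t (y t) - e t" for z :: "real \<Rightarrow> real^'n" and t
  define F where "F z = Gam \<tau> (hz z)" for z
  define D where "D z \<longleftrightarrow> continuous_on S z \<and> (\<forall>t\<in>S. nrm (z t) \<le> \<kappa> * \<epsilon>)" for z :: "real \<Rightarrow> real^'n"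
  have lipz: "nrm (f t (y t + z1) - f t (y t + z2)) \<le> L * nrm (z1 - z2)"
    if "t \<in> S" "nrm z1 \<le> \<kappa> * \<epsilon>" "nrm z2 \<le> \<kappa> * \<epsilon>" for t z1 z2
  proof -
    have yt: "nrm (y t) \<le> \<rho>" using yin that(1) unfolding S_def nball_def by simp
    have "nrm (y t + z1) \<le> \<rho> + \<delta>" using np(4)[of "y t" z1] yt that(2) kd by linarith
    moreover have "nrm (y t + z2) \<le> \<rho> + \<delta>" using np(4)[of "y t" z2] yt that(3) kd by linarith
    ultimately have "y t + z1 \<in> nball nrm 0 (\<rho> + \<delta>)" "y t + z2 \<in> nball nrm 0 (\<rho> + \<delta>)"
      unfolding nball_def by simp_all
    then have "nrm (f t (y t + z1) - f t (y t + z2)) \<le> L * nrm ((y t + z1) - (y t + z2))"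
      using lip Ssub[OF that(1)] by blast
    then show ?thesis by simp
  qed
  have np0: "nrm (0::real^'n) \<le> \<kappa> * \<epsilon>" using np(1) kap0 eps(1) by simp
  have hz_cont: "continuous_on S (hz z)" if "continuous_on S z" for z
    unfolding hz_def by (intro continuous_on_diff fcomp econt continuous_on_add ycont that)
  have hz_bnd: "nrm (hz z t) \<le> L * (\<kappa> * \<epsilon>) + \<epsilon>" if "D z" "t \<in> S" for z t
  proof -
    have "nrm (f t (y t + z t) - f t (y t + 0)) \<le> L * nrm (z t - 0)"
      by (rule lipz[OF that(2)]) (use that np0 in \<open>auto simp: D_def\<close>)
    also have "\<dots> \<le> L * (\<kappa> * \<epsilon>)" using that L0 by (auto simp: D_def intro: mult_left_mono)
    finally have "nrm (f t (y t + z t) - f t (y t)) \<le> L * (\<kappa> * \<epsilon>)" by simp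
    moreover have "nrm (hz z t) \<le> nrm (f t (y t + z t) - f t (y t)) + nrm (e t)"
      unfolding hz_def by (rule np(8))
    ultimately show ?thesis using ebnd[OF that(2)] by linarith
  qed
  have M0: "0 \<le> L * (\<kappa> * \<epsilon>) + \<epsilon>" using L0 kap0 eps(1) by simp
  have FD: "D (F z)" if "D z" for z
  proof -
    have zc: "continuous_on S z" using that D_def by blast
    have "continuous_on S (F z)" unfolding F_def S_def
      by (rule Gam_cont[OF tau]) (use hz_cont[OF zc] S_def in simp)
    moreover have "nrm (F z t) \<le> \<kappa> * \<epsilon>" if "t \<in> S" for t
    proof -
      have "nrm (F z t) \<le> (a + b) / lam * (L * (\<kappa> * \<epsilon>) + \<epsilon>)" unfolding F_def
        by (rule Gam_bound[OF tau _ _ M0]) (use hz_cont[OF zc] hz_bnd[OF \<open>D z\<close>] that S_def in auto)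
      then show ?thesis using kapeq unfolding K_def by simp
    qed
    ultimately show ?thesis unfolding D_def by blast
  qed
  have Flip: "nrm (F z1 t - F z2 t) \<le> q * d"
    if "D z1" "D z2" "\<And>s. s \<in> S \<Longrightarrow> nrm (z1 s - z2 s) \<le> d" "0 \<le> d" "t \<in> S" for z1 z2 d t
  proof -
    have c1: "continuous_on S z1" and c2: "continuous_on S z2" using that D_def by auto
    have "F z1 t - F z2 t = Gam \<tau> (\<lambda>s. hz z1 s - hz z2 s) t" unfolding F_def
      by (rule Gam_diff[OF tau _ _ _ M0 _ M0, symmetric])
         (use hz_cont[OF c1] hz_cont[OF c2] hz_bnd[OF \<open>D z1\<close>] hz_bnd[OF \<open>D z2\<close>] that(5) S_def in auto)
    also have "nrm \<dots> \<le> (a + b) / lam * (L * d)"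
    proof (rule Gam_bound[OF tau])
      show "continuous_on (ivl \<tau>) (\<lambda>s. hz z1 s - hz z2 s)"
        using continuous_on_diff[OF hz_cont[OF c1] hz_cont[OF c2]] S_def by simp
      show "0 \<le> L * d" using L0 that(4) by simp
      show "t \<in> ivl \<tau>" using that(5) S_def by simp
      fix s assume s: "s \<in> ivl \<tau>"
      then have sS: "s \<in> S" using S_def by simp
      have "hz z1 s - hz z2 s = f s (y s + z1 s) - f s (y s + z2 s)" unfolding hz_def by simp
      then have "nrm (hz z1 s - hz z2 s) \<le> L * nrm (z1 s - z2 s)"
        using lipz[OF sS, of "z1 s" "z2 s"] that(1,2) sS unfolding D_def by simp
      also have "\<dots> \<le> L * d" using that(3)[OF sS] L0 by (intro mult_left_mono)
      finally show "nrm (hz z1 s - hz z2 s) \<le> L * d" .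
    qed
    finally show ?thesis unfolding q_def K_def by (simp add: mult.assoc)
  qed
  define zs where "zs = rec_nat (\<lambda>_::real. 0::real^'n) (\<lambda>_ z. F z)"
  have zs0: "zs 0 = (\<lambda>_. 0)" and zsS: "\<And>k. zs (Suc k) = F (zs k)" by (simp_all add: zs_def)
  have zsD: "D (zs k)" for k
  proof (induction k)
    case 0 then show ?case unfolding zs0 D_def using np0 by simp
  next
    case (Suc k) then show ?case unfolding zsS by (rule FD)
  qed
  have step: "\<forall>t\<in>S. nrm (zs (Suc k) t - zs k t) \<le> q ^ k * (\<kappa> * \<epsilon>)" for k
  proof (induction k)
    case 0
    show ?case using zsD[of 1] unfolding D_def zs0 by simp
  next
    case (Suc k)
    show ?case
    proof
      fix t assume t: "t \<in> S"
      have "nrm (F (zs (Suc k)) t - F (zs k) t) \<le> q * (q ^ k * (\<kappa> * \<epsilon>))"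
        by (rule Flip[OF zsD zsD _ _ t]) (use Suc q0 kap0 eps(1) in \<open>auto simp: zsS\<close>)
      then show "nrm (zs (Suc (Suc k)) t - zs (Suc k) t) \<le> q ^ Suc k * (\<kappa> * \<epsilon>)"
        by (simp add: zsS[of "Suc k"] zsS[of k])
    qed
  qed
  have q1': "1 - q \<noteq> 0" "1 - q > 0" using q0 by auto
  have cauchy: "nrm (zs (n + j) t - zs n t) \<le> (q ^ n - q ^ (n + j)) / (1 - q) * (\<kappa> * \<epsilon>)"
    if t: "t \<in> S" for n j t
  proof (induction j)
    case 0 then show ?case by (simp add: np(1))
  next
    case (Suc j)
    have "nrm (zs (n + Suc j) t - zs n t) \<le> nrm (zs (Suc (n + j)) t - zs (n + j) t) + nrm (zs (n + j) t - zs n t)"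
      using np(4)[of "zs (Suc (n + j)) t - zs (n + j) t" "zs (n + j) t - zs n t"] by simp
    also have "\<dots> \<le> q ^ (n + j) * (\<kappa> * \<epsilon>) + (q ^ n - q ^ (n + j)) / (1 - q) * (\<kappa> * \<epsilon>)"
      using step[of "n + j"] t Suc by (intro add_mono) auto
    also have "\<dots> = (q ^ n - q ^ (n + Suc j)) / (1 - q) * (\<kappa> * \<epsilon>)"
      using q1' by (simp add: field_simps)
    finally show ?case .
  qed
  have cauchy2: "nrm (zs m t - zs n t) \<le> q ^ n / (1 - q) * (\<kappa> * \<epsilon>)" if "n \<le> m" "t \<in> S" for m n t
  proof -
    obtain j where m: "m = n + j" using \<open>n \<le> m\<close> le_Suc_ex by blast
    have "nrm (zs m t - zs n t) \<le> (q ^ n - q ^ (n + j)) / (1 - q) * (\<kappa> * \<epsilon>)"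
      unfolding m by (rule cauchy[OF that(2)])
    also have "\<dots> \<le> q ^ n / (1 - q) * (\<kappa> * \<epsilon>)"
      using q0 q1' kap0 eps(1) by (intro mult_right_mono divide_right_mono) auto
    finally show ?thesis .
  qed
  define B where "B n = q ^ n / (1 - q) * (\<kappa> * \<epsilon>) / c" for n
  have normB: "norm (zs m t - zs n t) \<le> B n" if "n \<le> m" "t \<in> S" for m n t
  proof -
    have "c * norm (zs m t - zs n t) \<le> q ^ n / (1 - q) * (\<kappa> * \<epsilon>)"
      using c(2) cauchy2[OF that] order.trans by blast
    then have "norm (zs m t - zs n t) * c \<le> q ^ n / (1 - q) * (\<kappa> * \<epsilon>)" by (simp add: mult.commute)
    then show ?thesis unfolding B_def using pos_le_divide_eq[OF c(1)] by blast
  qed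
  have Bmono: "B n \<le> B N" if "N \<le> n" for n N
    unfolding B_def using q0 q1' kap0 eps(1) c(1) that
    by (intro divide_right_mono mult_right_mono power_decreasing) auto
  have B0: "B \<longlonglongrightarrow> 0"
  proof -
    have "(\<lambda>n. q ^ n) \<longlonglongrightarrow> 0" using q0 by (intro LIMSEQ_power_zero) auto
    then have "(\<lambda>n. q ^ n * ((\<kappa> * \<epsilon>) / ((1 - q) * c))) \<longlonglongrightarrow> 0 * ((\<kappa> * \<epsilon>) / ((1 - q) * c))"
      by (rule tendsto_mult[OF _ tendsto_const])
    moreover have "B = (\<lambda>n. q ^ n * ((\<kappa> * \<epsilon>) / ((1 - q) * c)))"
      unfolding B_def by (rule ext) simp
    ultimately show ?thesis by simp
  qed
  have "uniformly_Cauchy_on S zs"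
  proof (rule uniformly_Cauchy_onI)
    fix e :: real assume "e > 0"
    then obtain N where N: "B N < e" using B0 by (metis LIMSEQ_D abs_less_iff diff_zero le_refl real_norm_def)
    show "\<exists>M. \<forall>x\<in>S. \<forall>m\<ge>M. \<forall>n\<ge>M. dist (zs m x) (zs n x) < e"
    proof (intro exI ballI allI impI)
      fix x m n assume x: "x \<in> S" and mn: "N \<le> m" "N \<le> n"
      show "dist (zs m x) (zs n x) < e"
      proof (cases "n \<le> m")
        case True
        then have "norm (zs m x - zs n x) \<le> B N" using normB[OF True x] Bmono[OF mn(2)] by linarith
        then show ?thesis using N by (simp add: dist_norm)
      next
        case False
        then have "norm (zs n x - zs m x) \<le> B N" using normB[of m n x] x Bmono[OF mn(1)] by linarith
        then show ?thesis using N by (simp add: dist_norm norm_minus_commute)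
      qed
    qed
  qed
  then have "uniformly_convergent_on S zs" by (rule Cauchy_uniformly_convergent)
  then obtain z where ul: "uniform_limit S zs z sequentially" unfolding uniformly_convergent_on_def by blast
  have zc: "continuous_on S z"
    by (rule uniform_limit_theorem[OF _ ul]) (use zsD D_def in auto)
  have ptw: "\<And>t. t \<in> S \<Longrightarrow> (\<lambda>n. zs n t) \<longlonglongrightarrow> z t"
    using tendsto_uniform_limitI[OF ul] by blast
  have nrm_isCont: "isCont nrm x" for x
    using nrm_continuous[OF nrm] continuous_on_eq_continuous_at[of UNIV nrm] by simp
  have zD: "D z"
    unfolding D_def
  proof (intro conjI ballI zc)
    fix t assume t: "t \<in> S"
    have "(\<lambda>n. nrm (zs n t)) \<longlonglongrightarrow> nrm (z t)" by (rule isCont_tendsto_compose[OF nrm_isCont ptw[OF t]])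
    moreover have "\<exists>N. \<forall>n\<ge>N. nrm (zs n t) \<le> \<kappa> * \<epsilon>" using zsD t unfolding D_def by blast
    ultimately show "nrm (z t) \<le> \<kappa> * \<epsilon>" by (rule LIMSEQ_le_const2)
  qed
  have fixed: "F z t = z t" if t: "t \<in> S" for t
  proof -
    have "(\<lambda>n. zs (Suc n) t) \<longlonglongrightarrow> F z t"
    proof (rule tendstoI)
      fix e :: real assume e: "e > 0"
      define e' where "e' = e * c / (q * C + 1)"
      have qC: "q * C + 1 > 0" using q0 C(1) by (simp add: add_nonneg_pos)
      have e'0: "e' > 0" unfolding e'_def using e c(1) qC by simp
      obtain N where N: "\<And>n x. n \<ge> N \<Longrightarrow> x \<in> S \<Longrightarrow> dist (zs n x) (z x) < e'"
        using ul e'0 unfolding uniform_limit_sequentially_iff by blast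
      show "eventually (\<lambda>n. dist (zs (Suc n) t) (F z t) < e) sequentially"
        unfolding eventually_sequentially
      proof (intro exI allI impI)
        fix n assume n: "N \<le> n"
        have d: "nrm (z s - zs n s) \<le> C * e'" if s: "s \<in> S" for s
        proof -
          have "nrm (z s - zs n s) \<le> C * norm (z s - zs n s)" by (rule C(2))
          also have "\<dots> \<le> C * e'" using N[OF n s] C(1) by (simp add: dist_norm norm_minus_commute)
          finally show ?thesis .
        qed
        have "nrm (F z t - F (zs n) t) \<le> q * (C * e')"
          by (rule Flip[OF zD zsD d _ t]) (use C(1) e'0 in auto)
        moreover have "c * norm (F z t - F (zs n) t) \<le> nrm (F z t - F (zs n) t)" by (rule c(2))
        ultimately have "c * norm (F z t - F (zs n) t) \<le> q * (C * e')" by linarith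
        moreover have "q * (C * e') = c * (q * C * e / (q * C + 1))"
          unfolding e'_def by simp
        ultimately have "c * norm (F z t - F (zs n) t) \<le> c * (q * C * e / (q * C + 1))" by linarith
        then have "norm (F z t - F (zs n) t) \<le> q * C * e / (q * C + 1)"
          using c(1) mult_le_cancel_left_pos[OF c(1)] by blast
        also have "\<dots> < e" using e qC by (simp add: field_simps)
        finally show "dist (zs (Suc n) t) (F z t) < e" by (simp add: zsS dist_norm norm_minus_commute)
      qed
    qed
    moreover have "(\<lambda>n. zs (Suc n) t) \<longlonglongrightarrow> z t" by (rule LIMSEQ_Suc[OF ptw[OF t]])
    ultimately show ?thesis by (rule LIMSEQ_unique)
  qed
  define x where "x t = y t + z t" for t
  have "is_solution (\<lambda>t x. A t *v x + f t x) \<tau> x"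
    unfolding is_solution_def
  proof
    fix t assume "t \<in> ivl \<tau>"
    then have t: "t \<in> S" unfolding S_def .
    have gd: "(Gam \<tau> (hz z) has_vector_derivative (A t *v Gam \<tau> (hz z) t + hz z t)) (at t within S)"
      unfolding S_def by (rule Gam_deriv[OF tau]) (use hz_cont[OF zc] t S_def in auto)
    have gz: "Gam \<tau> (hz z) t = z t" using fixed[OF t] unfolding F_def .
    have gd': "(Gam \<tau> (hz z) has_vector_derivative (A t *v z t + hz z t)) (at t within S)"
      using gd unfolding gz .
    have zder: "(z has_vector_derivative (A t *v z t + hz z t)) (at t within S)"
      by (rule has_vector_derivative_transform[OF t _ gd']) (use fixed F_def in auto)
    have "(x has_vector_derivative (y' t + (A t *v z t + hz z t))) (at t within S)"
      unfolding x_def by (rule has_vector_derivative_add[OF yder[OF t] zder])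
    moreover have "y' t + (A t *v z t + hz z t) = A t *v x t + f t (x t)"
      unfolding hz_def e_def x_def by (simp add: matrix_vector_right_distrib algebra_simps)
    ultimately show "(x has_vector_derivative A t *v x t + f t (x t)) (at t within ivl \<tau>)"
      unfolding S_def by simp
  qed
  moreover have "\<forall>t\<in>ivl \<tau>. nrm (x t - y t) \<le> (a + b) / lam / (1 - (a + b) / lam * L) * \<epsilon>"
    using zD unfolding D_def x_def S_def \<kappa>_def q_def K_def by simp
  ultimately show ?thesis by blast
qed

end


lemma (in green) shadow:
  fixes f :: "real \<Rightarrow> real^'n \<Rightarrow> real^'n"
  assumes fc: "continuous_on ({0..} \<times> UNIV) (\<lambda>(t, x). f t x)"
    and lip: "\<forall>t\<ge>0. \<forall>x1\<in>nball nrm 0 (\<rho> + \<delta>). \<forall>x2\<in>nball nrm 0 (\<rho> + \<delta>).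
           nrm (f t x1 - f t x2) \<le> L * nrm (x1 - x2)"
    and L0: "0 \<le> L" and q1: "(a + b) / lam * L < 1" and apos: "0 < a + b" and d0: "0 < \<delta>"
  shows "cond_lipschitz_shadowing nrm (\<lambda>t x. A t *v x + f t x) (nball nrm 0 \<rho>)"
proof -
  define \<kappa> where "\<kappa> = (a + b) / lam / (1 - (a + b) / lam * L)"
  have k0: "\<kappa> > 0" unfolding \<kappa>_def using apos lam q1 by simp
  show ?thesis
    unfolding cond_lipschitz_shadowing_def
  proof (rule exI[of _ "\<delta> / \<kappa>"], rule exI[of _ \<kappa>], intro conjI allI impI)
    show "\<delta> / \<kappa> > 0" using d0 k0 by simp
    show "\<kappa> > 0" by (rule k0)
    fix \<epsilon> \<tau> y
    assume h: "0 < \<epsilon>" "\<epsilon> \<le> \<delta> / \<kappa>" "0 < \<tau>" "is_pseudosolution nrm (\<lambda>t x. A t *v x + f t x) \<tau> y"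
      "pseudo_err nrm (\<lambda>t x. A t *v x + f t x) \<tau> y \<le> \<epsilon>" "\<forall>t\<in>ivl \<tau>. y t \<in> nball nrm 0 \<rho>"
    have "\<kappa> * \<epsilon> \<le> \<delta>" using h(2) k0 by (simp add: field_simps)
    then show "\<exists>x. is_solution (\<lambda>t x. A t *v x + f t x) \<tau> x \<and> (\<forall>t\<in>ivl \<tau>. nrm (x t - y t) \<le> \<kappa> * \<epsilon>)"
      using shadow_one[OF fc lip L0 q1 apos h(3) h(1) _ h(4,5,6)] unfolding \<kappa>_def by blast
  qed
qed

lemma vec_bound_from_mat:
  assumes "is_norm nrm" "mat_norm nrm M \<le> B"
  shows "nrm (M *v v) \<le> B * nrm v"
  using mat_norm_bound[OF assms(1), of M v] mult_right_mono[OF assms(2) nrm_props(2)[OF assms(1), of v]]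
  by linarith

lemma dich_green:
  assumes nrm: "is_norm nrm" and Ac: "continuous_on {0..} A" and d: "exp_dichotomy_with nrm A P N lam"
  shows "\<exists>T. green nrm A T P N N lam"
proof -
  from d obtain T where N0: "N > 0" "lam > 0" and T: "is_transition_matrix A T"
    and comm: "\<forall>t\<ge>0. \<forall>s\<ge>0. P t ** T t s = T t s ** P s"
    and b1: "\<forall>t s. 0 \<le> s \<longrightarrow> s \<le> t \<longrightarrow> mat_norm nrm (T t s ** P s) \<le> N * exp (- lam * (t - s))"
    and b2: "\<forall>t s. 0 \<le> t \<longrightarrow> t \<le> s \<longrightarrow> mat_norm nrm (T t s ** (mat 1 - P s)) \<le> N * exp (- lam * (s - t))"
    unfolding exp_dichotomy_with_def by blast
  have "green nrm A T P N N lam"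
  proof (unfold_locales)
    show "is_norm nrm" "continuous_on {0..} A" "is_transition_matrix A T" "0 \<le> N" "0 < lam"
      using nrm Ac T N0 by auto
    show "\<And>t s. 0 \<le> t \<Longrightarrow> 0 \<le> s \<Longrightarrow> P t ** T t s = T t s ** P s" using comm by blast
    fix t s v
    show "0 \<le> s \<Longrightarrow> s \<le> t \<Longrightarrow> nrm (T t s *v (P s *v v)) \<le> N * exp (- lam * (t - s)) * nrm v"
      using vec_bound_from_mat[OF nrm, of "T t s ** P s" _ v] b1 by (simp add: matrix_vector_mul_assoc)
    show "0 \<le> t \<Longrightarrow> t \<le> s \<Longrightarrow> nrm (T t s *v ((mat 1 - P s) *v v)) \<le> N * exp (- lam * (s - t)) * nrm v"
      using vec_bound_from_mat[OF nrm, of "T t s ** (mat 1 - P s)" _ v] b2 by (simp add: matrix_vector_mul_assoc)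
  qed
  then show ?thesis by blast
qed

lemma contr_green:
  assumes nrm: "is_norm nrm" and Ac: "continuous_on {0..} A" and d: "exp_dichotomy_with nrm A (\<lambda>_. mat 1) N lam"
  shows "\<exists>T. green nrm A T (\<lambda>_. mat 1) N 0 lam"
proof -
  from d obtain T where N0: "N > 0" "lam > 0" and T: "is_transition_matrix A T"
    and b1: "\<forall>t s. 0 \<le> s \<longrightarrow> s \<le> t \<longrightarrow> mat_norm nrm (T t s ** mat 1) \<le> N * exp (- lam * (t - s))"
    unfolding exp_dichotomy_with_def by blast
  have "green nrm A T (\<lambda>_. mat 1) N 0 lam"
  proof (unfold_locales)
    show "is_norm nrm" "continuous_on {0..} A" "is_transition_matrix A T" "0 \<le> N" "0 < lam" "0 \<le> (0::real)"
      using nrm Ac T N0 by auto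
    show "\<And>t s. 0 \<le> t \<Longrightarrow> 0 \<le> s \<Longrightarrow> mat 1 ** T t s = T t s ** mat 1" by simp
    fix t s v
    show "0 \<le> s \<Longrightarrow> s \<le> t \<Longrightarrow> nrm (T t s *v (mat 1 *v v)) \<le> N * exp (- lam * (t - s)) * nrm v"
      using vec_bound_from_mat[OF nrm, of "T t s ** mat 1" _ v] b1 by simp
    show "0 \<le> t \<Longrightarrow> t \<le> s \<Longrightarrow> nrm (T t s *v ((mat 1 - mat 1) *v v)) \<le> 0 * exp (- lam * (s - t)) * nrm v"
      using nrm_props(1)[OF nrm] by simp
  qed
  then show ?thesis by blast
qed

lemma exp_green:
  assumes nrm: "is_norm nrm" and Ac: "continuous_on {0..} A" and d: "exp_dichotomy_with nrm A (\<lambda>_. 0) N lam"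
  shows "\<exists>T. green nrm A T (\<lambda>_. 0) 0 N lam"
proof -
  from d obtain T where N0: "N > 0" "lam > 0" and T: "is_transition_matrix A T"
    and b2: "\<forall>t s. 0 \<le> t \<longrightarrow> t \<le> s \<longrightarrow> mat_norm nrm (T t s ** (mat 1 - 0)) \<le> N * exp (- lam * (s - t))"
    unfolding exp_dichotomy_with_def by blast
  have "green nrm A T (\<lambda>_. 0) 0 N lam"
  proof (unfold_locales)
    show "is_norm nrm" "continuous_on {0..} A" "is_transition_matrix A T" "0 \<le> N" "0 < lam" "0 \<le> (0::real)"
      using nrm Ac T N0 by auto
    show "\<And>t s. 0 \<le> t \<Longrightarrow> 0 \<le> s \<Longrightarrow> 0 ** T t s = T t s ** 0" by simp
    fix t s v
    show "0 \<le> s \<Longrightarrow> s \<le> t \<Longrightarrow> nrm (T t s *v (0 *v v)) \<le> 0 * exp (- lam * (t - s)) * nrm v"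
      using nrm_props(1)[OF nrm] by simp
    show "0 \<le> t \<Longrightarrow> t \<le> s \<Longrightarrow> nrm (T t s *v ((mat 1 - 0) *v v)) \<le> N * exp (- lam * (s - t)) * nrm v"
      using vec_bound_from_mat[OF nrm, of "T t s ** (mat 1 - 0)" _ v] b2 by (simp add: matrix_vector_mul_assoc)
  qed
  then show ?thesis by blast
qed

theorem mainTheorem3:
  fixes nrm :: "real^'n \<Rightarrow> real"
    and A :: "real \<Rightarrow> real^'n^'n"
    and f :: "real \<Rightarrow> real^'n \<Rightarrow> real^'n"
    and \<rho> N lam \<delta> L :: real
  assumes "is_norm nrm"
    and "\<rho> > 0"
    and "continuous_on {0..} A"
    and "continuous_on ({0..} \<times> UNIV) (\<lambda>(t, x). f t x)"
    and "has_exp_dichotomy nrm A N lam"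
    and "\<delta> > 0" and "L > 0"
    and "\<forall>t\<ge>0. \<forall>x1\<in>nball nrm 0 (\<rho> + \<delta>). \<forall>x2\<in>nball nrm 0 (\<rho> + \<delta>).
           nrm (f t x1 - f t x2) \<le> L * nrm (x1 - x2)"
  shows "(L < lam / (2 * N) \<longrightarrow>
            cond_lipschitz_shadowing nrm (\<lambda>t x. A t *v x + f t x) (nball nrm 0 \<rho>))
       \<and> ((has_exp_contraction nrm A N lam \<or> has_exp_expansion nrm A N lam) \<longrightarrow> L < lam / N \<longrightarrow>
            cond_lipschitz_shadowing nrm (\<lambda>t x. A t *v x + f t x) (nball nrm 0 \<rho>))"
proof -
  obtain P where dP: "exp_dichotomy_with nrm A P N lam" using assms(5) unfolding has_exp_dichotomy_def by blast
  have N0: "N > 0" "lam > 0" using dP unfolding exp_dichotomy_with_def by auto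
  have L0: "0 \<le> L" using assms(7) by simp
  have part1: "cond_lipschitz_shadowing nrm (\<lambda>t x. A t *v x + f t x) (nball nrm 0 \<rho>)" if "L < lam / (2 * N)"
  proof -
    obtain T where g: "green nrm A T P N N lam" using dich_green[OF assms(1,3) dP] by blast
    have "(N + N) / lam * L < 1" using that N0 by (simp add: field_simps)
    then show ?thesis
      using green.shadow[OF g assms(4) assms(8) L0 _ _ assms(6)] N0 by simp
  qed
  have part2: "cond_lipschitz_shadowing nrm (\<lambda>t x. A t *v x + f t x) (nball nrm 0 \<rho>)"
    if "has_exp_contraction nrm A N lam \<or> has_exp_expansion nrm A N lam" "L < lam / N"
  proof -
    have q: "N / lam * L < 1" using that(2) N0 by (simp add: field_simps)
    from that(1) show ?thesis
    proof
      assume "has_exp_contraction nrm A N lam"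
      then obtain T where g: "green nrm A T (\<lambda>_. mat 1) N 0 lam"
        using contr_green[OF assms(1,3)] unfolding has_exp_contraction_def by blast
      show ?thesis using green.shadow[OF g assms(4) assms(8) L0 _ _ assms(6)] N0 q by simp
    next
      assume "has_exp_expansion nrm A N lam"
      then obtain T where g: "green nrm A T (\<lambda>_. 0) 0 N lam"
        using exp_green[OF assms(1,3)] unfolding has_exp_expansion_def by blast
      show ?thesis using green.shadow[OF g assms(4) assms(8) L0 _ _ assms(6)] N0 q by simp
    qed
  qed
  show ?thesis using part1 part2 by blast
qed


end
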